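(* Let $f:X\to Y$ be a function between topological spaces, where $\gamma$ is a regular operation. Then $f$ is $\gamma$-semi-continuous if and only if for each $x\in X$ and each $\gamma$-open set $B\subseteq Y$ containing $f(x)$, there exists a $\gamma^{*}$-semi-open set $A\subseteq X$ such that $x\in A$ and $f(A)\subseteq B$.
   Context: Each of the spaces $X$, $Y$ carries an operation, both denoted $\gamma$: a map $V\mapsto V^\gamma$ from open sets to subsets with $V\subseteq V^\gamma$. In a space $Z$, for $A\subseteq Z$, $int_\gamma(A)=\{x\in A: \text{there is an open } N \text{ with } x\in N,\ N^\gamma\subseteq A\}$; $A$ is $\gamma$-open iff $A=int_\gamma(A)$. $cl_\gamma(A)$ is the set of $x\in Z$ such that $U^\gamma\cap A\neq\emptyset$ for every open $U\ni x$. $A$ is $\gamma^{*}$-semi-open if there is a $\gamma$-open $O$ with $O\subseteq A\subseteq cl_\gamma(O)$. $f$ is $\gamma$-semi-continuous if $f^{-1}(B)$ is $\gamma^{*}$-semi-open in $X$ for every $\gamma$-open $B$ in $Y$. $\gamma$ is regular if for every point $x$ and open neighbourhoods $U,V$ of $x$ there is an open neighbourhood $W$ of $x$ with $W^\gamma\subseteq U^\gamma\cap V^\gamma$. *)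

theory Defs
  imports "HOL-Analysis.Analysis"
begin

text \<open>An operation on the space T: a map V |-> g V with V contained in g V for open V.
  Only its values on open sets matter.\<close>
definition is_operation :: "'a topology \<Rightarrow> ('a set \<Rightarrow> 'a set) \<Rightarrow> bool" where
  "is_operation T g \<longleftrightarrow> (\<forall>V. openin T V \<longrightarrow> V \<subseteq> g V)"

definition gamma_int :: "'a topology \<Rightarrow> ('a set \<Rightarrow> 'a set) \<Rightarrow> 'a set \<Rightarrow> 'a set" where
  "gamma_int T g A = {x \<in> A. \<exists>N. openin T N \<and> x \<in> N \<and> g N \<subseteq> A}"

definition gamma_open :: "'a topology \<Rightarrow> ('a set \<Rightarrow> 'a set) \<Rightarrow> 'a set \<Rightarrow> bool" where
  "gamma_open T g A \<longleftrightarrow> A \<subseteq> topspace T \<and> A = gamma_int T g A"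

definition gamma_cl :: "'a topology \<Rightarrow> ('a set \<Rightarrow> 'a set) \<Rightarrow> 'a set \<Rightarrow> 'a set" where
  "gamma_cl T g A = {x \<in> topspace T. \<forall>U. openin T U \<and> x \<in> U \<longrightarrow> g U \<inter> A \<noteq> {}}"

definition gamma_star_semi_open :: "'a topology \<Rightarrow> ('a set \<Rightarrow> 'a set) \<Rightarrow> 'a set \<Rightarrow> bool" where
  "gamma_star_semi_open T g A \<longleftrightarrow> A \<subseteq> topspace T \<and>
     (\<exists>G. gamma_open T g G \<and> G \<subseteq> A \<and> A \<subseteq> gamma_cl T g G)"

definition regular_operation :: "'a topology \<Rightarrow> ('a set \<Rightarrow> 'a set) \<Rightarrow> bool" where
  "regular_operation T g \<longleftrightarrow>
     (\<forall>x U V. openin T U \<and> openin T V \<and> x \<in> U \<and> x \<in> V \<longrightarrow>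
        (\<exists>W. openin T W \<and> x \<in> W \<and> g W \<subseteq> g U \<inter> g V))"

definition gamma_semi_continuous ::
  "'a topology \<Rightarrow> ('a set \<Rightarrow> 'a set) \<Rightarrow> 'b topology \<Rightarrow> ('b set \<Rightarrow> 'b set) \<Rightarrow> ('a \<Rightarrow> 'b) \<Rightarrow> bool" where
  "gamma_semi_continuous X gX Y gY f \<longleftrightarrow>
     (\<forall>B. gamma_open Y gY B \<longrightarrow> gamma_star_semi_open X gX (topspace X \<inter> f -` B))"

end

theory Submission
  imports Defs
begin

theorem theorem4p2:
  fixes X :: "'a topology" and Y :: "'b topology"
    and gX :: "'a set \<Rightarrow> 'a set" and gY :: "'b set \<Rightarrow> 'b set"
    and f :: "'a \<Rightarrow> 'b"
  assumes "is_operation X gX" and "is_operation Y gY"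
    and "regular_operation X gX" and "regular_operation Y gY"
    and "f ` topspace X \<subseteq> topspace Y"
  shows "gamma_semi_continuous X gX Y gY f \<longleftrightarrow>
    (\<forall>x \<in> topspace X. \<forall>B. gamma_open Y gY B \<and> f x \<in> B \<longrightarrow>
       (\<exists>A. gamma_star_semi_open X gX A \<and> x \<in> A \<and> f ` A \<subseteq> B))"
proof
  assume "gamma_semi_continuous X gX Y gY f"
  then show "\<forall>x \<in> topspace X. \<forall>B. gamma_open Y gY B \<and> f x \<in> B \<longrightarrow>
       (\<exists>A. gamma_star_semi_open X gX A \<and> x \<in> A \<and> f ` A \<subseteq> B)"
    unfolding gamma_semi_continuous_def
    by (intro ballI allI impI, rule_tac x="topspace X \<inter> f -` B" in exI) auto
next
  assume H: "\<forall>x \<in> topspace X. \<forall>B. gamma_open Y gY B \<and> f x \<in> B \<longrightarrow>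
       (\<exists>A. gamma_star_semi_open X gX A \<and> x \<in> A \<and> f ` A \<subseteq> B)"
  show "gamma_semi_continuous X gX Y gY f"
    unfolding gamma_semi_continuous_def
  proof (intro allI impI)
    fix B assume B: "gamma_open Y gY B"
    define P where "P = topspace X \<inter> f -` B"
    have "\<forall>x\<in>P. \<exists>AG. gamma_open X gX (snd AG) \<and> snd AG \<subseteq> fst AG \<and> fst AG \<subseteq> gamma_cl X gX (snd AG)
           \<and> fst AG \<subseteq> topspace X \<and> x \<in> fst AG \<and> f ` fst AG \<subseteq> B"
    proof
      fix x assume "x \<in> P"
      then obtain A where A: "gamma_star_semi_open X gX A" "x \<in> A" "f ` A \<subseteq> B"
        using H B unfolding P_def by blast
      then obtain G where "gamma_open X gX G" "G \<subseteq> A" "A \<subseteq> gamma_cl X gX G" "A \<subseteq> topspace X"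
        unfolding gamma_star_semi_open_def by blast
      then show "\<exists>AG. gamma_open X gX (snd AG) \<and> snd AG \<subseteq> fst AG \<and> fst AG \<subseteq> gamma_cl X gX (snd AG)
           \<and> fst AG \<subseteq> topspace X \<and> x \<in> fst AG \<and> f ` fst AG \<subseteq> B"
        using A by (intro exI[of _ "(A,G)"]) auto
    qed
    then obtain c where c: "\<And>x. x\<in>P \<Longrightarrow> gamma_open X gX (snd (c x)) \<and> snd (c x) \<subseteq> fst (c x)
        \<and> fst (c x) \<subseteq> gamma_cl X gX (snd (c x))
           \<and> fst (c x) \<subseteq> topspace X \<and> x \<in> fst (c x) \<and> f ` fst (c x) \<subseteq> B"
      by metis
    define G where "G = (\<Union>x\<in>P. snd (c x))"
    have GP: "G \<subseteq> P" unfolding G_def P_def using c unfolding P_def by blast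
    have GO: "gamma_open X gX G"
    proof -
      have "G \<subseteq> topspace X" using GP P_def by blast
      moreover have "G \<subseteq> gamma_int X gX G"
      proof
        fix y assume "y \<in> G"
        then obtain x where x: "x \<in> P" "y \<in> snd (c x)" unfolding G_def by blast
        then have "y \<in> gamma_int X gX (snd (c x))" using c[OF x(1)] unfolding gamma_open_def by blast
        then obtain N where "openin X N" "y \<in> N" "gX N \<subseteq> snd (c x)" unfolding gamma_int_def by blast
        moreover have "snd (c x) \<subseteq> G" using x unfolding G_def by blast
        ultimately show "y \<in> gamma_int X gX G" using \<open>y \<in> G\<close> unfolding gamma_int_def by blast
      qed
      moreover have "gamma_int X gX G \<subseteq> G" unfolding gamma_int_def by blast
      ultimately show ?thesis unfolding gamma_open_def by blast
    qed
    have "P \<subseteq> gamma_cl X gX G"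
    proof
      fix y assume y: "y \<in> P"
      have "y \<in> gamma_cl X gX (snd (c y))" using c[OF y] by blast
      moreover have "snd (c y) \<subseteq> G" using y unfolding G_def by blast
      ultimately show "y \<in> gamma_cl X gX G" unfolding gamma_cl_def by blast
    qed
    then show "gamma_star_semi_open X gX P"
      unfolding gamma_star_semi_open_def using GO GP P_def by blast
  qed
qed

end
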